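(* Let $d\ge1$, $M>0$, and let $f:[0,1]^d\to\mathbb{R}$ satisfy $|f(x)-f(y)|\le M\|x-y\|_\infty$ for all $x,y\in[0,1]^d$; let $g(x)=f(x)\bmod 1$. Let $m>1$ be an integer, $x_i=\frac{i-1}{m-1}$ for $i\in[m]$, and for $\mathbf{i}=(i_1,\dots,i_d)\in[m]^d$ let $x_{\mathbf i}=(x_{i_1},\dots,x_{i_d})$. Let $\delta\in[0,1/2]$ and $\hat g:[0,1]^d\to[0,1)$ satisfy $d_w(\hat g(x_{\mathbf i}),g(x_{\mathbf i}))\le\delta$ for all $\mathbf i\in[m]^d$. For each $\mathbf i$ let $\eta_{\mathbf i}\in[-\delta,\delta]$ be such that $\hat g(x_{\mathbf i})=(f(x_{\mathbf i})+\eta_{\mathbf i})\bmod 1$, and set $\hat f(x_{\mathbf i}):=f(x_{\mathbf i})+\eta_{\mathbf i}$. If $2\delta+\frac{M}{m-1}<\frac12$, then for each $j\in[d]$ and each $\mathbf i\in[m]^d$ with $i_j>1$, $$D_j\hat f(x_{\mathbf i})=\begin{cases}D_j\hat g(x_{\mathbf i}) & \text{if } |D_j\hat g(x_{\mathbf i})|<1/2,\\ 1+D_j\hat g(x_{\mathbf i}) & \text{if } D_j\hat g(x_{\mathbf i})<-1/2,\\ -1+D_j\hat g(x_{\mathbf i}) & \text{if } D_j\hat g(x_{\mathbf i})>1/2.\end{cases}$$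
   Context: For $a\in\mathbb{R}$, $a\bmod1=a-\lfloor a\rfloor\in[0,1)$. The wrap-around distance on $[0,1)$ is $d_w(a,b)=\min(|a-b|,1-|a-b|)$. $[m]=\{1,\dots,m\}$. For a function $h$ defined on the grid points and $\mathbf i\in[m]^d$ with $i_j>1$, the finite difference along coordinate $j$ is $D_jh(x_{\mathbf i})=h(x_{i_1},\dots,x_{i_j},\dots,x_{i_d})-h(x_{i_1},\dots,x_{i_j-1},\dots,x_{i_d})$. *)

theory Defs
  imports "HOL-Analysis.Analysis"
begin

definition mod1 :: "real \<Rightarrow> real" where
  "mod1 a = a - of_int \<lfloor>a\<rfloor>"

definition dw :: "real \<Rightarrow> real \<Rightarrow> real" where
  "dw a b = min \<bar>a - b\<bar> (1 - \<bar>a - b\<bar>)"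

definition linf_dist :: "real^'n \<Rightarrow> real^'n \<Rightarrow> real" where
  "linf_dist x y = Max (range (\<lambda>k. \<bar>x$k - y$k\<bar>))"

definition unit_cube :: "(real^'n) set" where
  "unit_cube = {x. \<forall>k. 0 \<le> x$k \<and> x$k \<le> 1}"

definition grid_pt :: "nat \<Rightarrow> ('n \<Rightarrow> nat) \<Rightarrow> real^'n" where
  "grid_pt m i = (\<chi> k. (real (i k) - 1) / (real m - 1))"

definition Dj :: "'n \<Rightarrow> (('n \<Rightarrow> nat) \<Rightarrow> real) \<Rightarrow> ('n \<Rightarrow> nat) \<Rightarrow> real" where
  "Dj j h i = h i - h (i(j := i j - 1))"

end

theory Submission
  imports Defs
begin

lemma grid_in_cube:
  assumes "m > 1" "\<forall>k. i k \<in> {1..m}"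
  shows "grid_pt m i \<in> unit_cube"
proof -
  have "0 \<le> (real (i k) - 1) / (real m - 1) \<and> (real (i k) - 1) / (real m - 1) \<le> 1" for k
  proof -
    have a: "1 \<le> i k" "i k \<le> m" using assms(2) by auto
    have "real m - 1 > 0" using assms(1) by simp
    then show ?thesis using a by (simp add: divide_simps)
  qed
  then show ?thesis unfolding unit_cube_def grid_pt_def by simp
qed

lemma linf_bound:
  fixes x y :: "real^'n"
  assumes "\<And>k. \<bar>x$k - y$k\<bar> \<le> c"
  shows "linf_dist x y \<le> c"
  unfolding linf_dist_def
  using assms by (subst Max_le_iff) auto

theorem mainTheorem3:
  fixes f ghat :: "real^'n \<Rightarrow> real" and M \<delta> :: real and m :: nat
    and \<eta> :: "('n \<Rightarrow> nat) \<Rightarrow> real"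
  assumes M_pos: "M > 0"
    and lip: "\<forall>x\<in>unit_cube. \<forall>y\<in>unit_cube. \<bar>f x - f y\<bar> \<le> M * linf_dist x y"
    and m_gt: "m > 1"
    and delta: "0 \<le> \<delta>" "\<delta> \<le> 1/2"
    and ghat_range: "\<forall>x\<in>unit_cube. 0 \<le> ghat x \<and> ghat x < 1"
    and ghat_close: "\<forall>i. (\<forall>k. i k \<in> {1..m}) \<longrightarrow>
                       dw (ghat (grid_pt m i)) (mod1 (f (grid_pt m i))) \<le> \<delta>"
    and eta: "\<forall>i. (\<forall>k. i k \<in> {1..m}) \<longrightarrow>
                 \<eta> i \<in> {-\<delta>..\<delta>} \<and> ghat (grid_pt m i) = mod1 (f (grid_pt m i) + \<eta> i)"
    and small: "2 * \<delta> + M / (real m - 1) < 1/2"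
    and i_grid: "\<forall>k. i k \<in> {1..m}"
    and ij: "i j > 1"
  shows "let Df = Dj j (\<lambda>i'. f (grid_pt m i') + \<eta> i') i;
             Dg = Dj j (\<lambda>i'. ghat (grid_pt m i')) i
         in (\<bar>Dg\<bar> < 1/2 \<longrightarrow> Df = Dg) \<and>
            (Dg < -1/2 \<longrightarrow> Df = 1 + Dg) \<and>
            (Dg > 1/2 \<longrightarrow> Df = -1 + Dg)"
proof -
  define i' where "i' = i(j := i j - 1)"
  have i'_grid: "\<forall>k. i' k \<in> {1..m}" using i_grid ij unfolding i'_def
    by (auto simp: le_diff_conv2) (metis atLeastAtMost_iff le_diff_conv2 less_imp_le_nat
       Suc_leI One_nat_def diff_le_self order_trans)
  define x where "x = grid_pt m i"
  define y where "y = grid_pt m i'"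
  have xc: "x \<in> unit_cube" using grid_in_cube[OF m_gt i_grid] x_def by simp
  have yc: "y \<in> unit_cube" using grid_in_cube[OF m_gt i'_grid] y_def by simp
  have mpos: "real m - 1 > 0" using m_gt by simp
  have "\<bar>x$k - y$k\<bar> \<le> 1 / (real m - 1)" for k
  proof (cases "k = j")
    case True
    have "real (i j - 1) = real (i j) - 1" using ij by simp
    then have "x$k - y$k = 1 / (real m - 1)"
      unfolding x_def y_def grid_pt_def i'_def using True mpos by (simp add: divide_simps)
    then show ?thesis using mpos by simp
  next
    case False
    then show ?thesis unfolding x_def y_def grid_pt_def i'_def using mpos by simp
  qed
  then have ld: "linf_dist x y \<le> 1 / (real m - 1)" by (rule linf_bound)
  have "\<bar>f x - f y\<bar> \<le> M * linf_dist x y" using lip xc yc by blast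
  also have "\<dots> \<le> M * (1 / (real m - 1))" using mult_left_mono[OF ld] M_pos by simp
  finally have fxy: "\<bar>f x - f y\<bar> \<le> M / (real m - 1)" by simp
  have e1: "\<eta> i \<in> {-\<delta>..\<delta>}" "ghat x = mod1 (f x + \<eta> i)" using eta i_grid x_def by auto
  have e2: "\<eta> i' \<in> {-\<delta>..\<delta>}" "ghat y = mod1 (f y + \<eta> i')" using eta i'_grid y_def by auto
  define Df where "Df = (f x + \<eta> i) - (f y + \<eta> i')"
  define Dg where "Dg = ghat x - ghat y"
  have Dfb: "\<bar>Df\<bar> < 1/2" using fxy e1(1) e2(1) small unfolding Df_def atLeastAtMost_iff by linarith
  have g1: "0 \<le> ghat x" "ghat x < 1" using ghat_range xc by auto
  have g2: "0 \<le> ghat y" "ghat y < 1" using ghat_range yc by auto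
  define k where "k = \<lfloor>f x + \<eta> i\<rfloor> - \<lfloor>f y + \<eta> i'\<rfloor>"
  have DgDf: "Dg = Df - of_int k" unfolding Dg_def Df_def k_def e1(2) e2(2) mod1_def by simp
  have "(\<bar>Dg\<bar> < 1/2 \<longrightarrow> Df = Dg) \<and> (Dg < -1/2 \<longrightarrow> Df = 1 + Dg) \<and> (Dg > 1/2 \<longrightarrow> Df = -1 + Dg)"
  proof (intro conjI impI)
    assume "\<bar>Dg\<bar> < 1/2"
    then have "\<bar>real_of_int k\<bar> < 1" using DgDf Dfb by linarith
    then have "k = 0" by linarith
    then show "Df = Dg" using DgDf by simp
  next
    assume a: "Dg < -1/2"
    have "Dg > -1" using g1 g2 Dg_def by simp
    then have "0 < real_of_int k" "real_of_int k < 2" using a DgDf Dfb by linarith+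
    then have "k = 1" by linarith
    then show "Df = 1 + Dg" using DgDf by simp
  next
    assume a: "Dg > 1/2"
    have "Dg < 1" using g1 g2 Dg_def by simp
    then have "0 > real_of_int k" "real_of_int k > -2" using a DgDf Dfb by linarith+
    then have "k = -1" by linarith
    then show "Df = -1 + Dg" using DgDf by simp
  qed
  then show ?thesis unfolding Let_def Dj_def Df_def Dg_def x_def y_def i'_def by simp
qed

end
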